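(* Let $N=2^n$ and let $f(x)=\sum_{k=0}^{d}\alpha_k e^{2\pi i k x/N}$ with $\alpha_k\in\mathbb{C}$ and $|f|^2\le1$. Then the $N\times N$ diagonal matrix $\mathcal{A}$ with $\mathcal{A}|x\rangle=f(x)|x\rangle$ for $x\in\{0,\dots,N-1\}$ can be implemented (as the top-left block, with respect to one ancilla qubit, of a unitary circuit) using $\mathcal{O}(d\log N)$ 1- and 2-qubit gates.
   Context: $|x\rangle$ denotes the computational basis state on $n=\log N$ qubits given by the binary representation of the integer $x$. Gates are arbitrary 1- and 2-qubit unitaries. *)

theory Defs
  imports Complex_Main "Jordan_Normal_Form.Matrix"
begin

definition qbit :: "nat \<Rightarrow> nat \<Rightarrow> nat" where
  "qbit k x = (x div 2 ^ k) mod 2"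

definition adjoint_mat :: "complex mat \<Rightarrow> complex mat" where
  "adjoint_mat U = mat (dim_col U) (dim_row U) (\<lambda>(i, j). cnj (U $$ (j, i)))"

definition unitary_mat :: "nat \<Rightarrow> complex mat \<Rightarrow> bool" where
  "unitary_mat k U \<longleftrightarrow> U \<in> carrier_mat k k \<and>
     U * adjoint_mat U = 1\<^sub>m k \<and> adjoint_mat U * U = 1\<^sub>m k"

(* A gate: an arbitrary 1-qubit unitary acting on qubit q, or an arbitrary
   2-qubit unitary acting on the ordered pair of distinct qubits (q1, q2). *)
datatype gate = G1 nat "complex mat" | G2 nat nat "complex mat"

fun valid_gate :: "nat \<Rightarrow> gate \<Rightarrow> bool" where
  "valid_gate m (G1 q U) \<longleftrightarrow> q < m \<and> unitary_mat 2 U"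
| "valid_gate m (G2 q1 q2 U) \<longleftrightarrow> q1 < m \<and> q2 < m \<and> q1 \<noteq> q2 \<and> unitary_mat 4 U"

(* The 2^m x 2^m matrix of a gate acting on an m-qubit register
   (tensor product of the gate with the identity on the other qubits). *)
fun gate_mat :: "nat \<Rightarrow> gate \<Rightarrow> complex mat" where
  "gate_mat m (G1 q U) = mat (2 ^ m) (2 ^ m) (\<lambda>(i, j).
     if (\<forall>k<m. k \<noteq> q \<longrightarrow> qbit k i = qbit k j)
     then U $$ (qbit q i, qbit q j) else 0)"
| "gate_mat m (G2 q1 q2 U) = mat (2 ^ m) (2 ^ m) (\<lambda>(i, j).
     if (\<forall>k<m. k \<noteq> q1 \<and> k \<noteq> q2 \<longrightarrow> qbit k i = qbit k j)
     then U $$ (2 * qbit q1 i + qbit q2 i, 2 * qbit q1 j + qbit q2 j) else 0)"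

(* The unitary implemented by a circuit: gates applied in list order. *)
definition circuit_mat :: "nat \<Rightarrow> gate list \<Rightarrow> complex mat" where
  "circuit_mat m gs = foldl (\<lambda>M g. gate_mat m g * M) (1\<^sub>m (2 ^ m)) gs"

definition trig_poly :: "nat \<Rightarrow> nat \<Rightarrow> (nat \<Rightarrow> complex) \<Rightarrow> real \<Rightarrow> complex" where
  "trig_poly n d \<alpha> x = (\<Sum>k\<le>d. \<alpha> k * exp (2 * of_real pi * \<i> * of_nat k * of_real x / 2 ^ n))"

end

theory Submission
  imports Defs "HOL-Computational_Algebra.Fundamental_Theorem_Algebra"
begin


definition pstar :: "nat \<Rightarrow> complex poly \<Rightarrow> complex poly" where
  "pstar m p = (\<Sum>k\<le>m. monom (cnj (coeff p k)) (m - k))"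

lemma poly_le_sum: "degree (p::complex poly) \<le> m \<Longrightarrow> poly p z = (\<Sum>k\<le>m. coeff p k * z^k)"
proof -
  assume a: "degree p \<le> m"
  have "poly p z = (\<Sum>i\<le>degree p. coeff p i * z^i)" by (rule poly_altdef)
  also have "\<dots> = (\<Sum>k\<le>m. coeff p k * z^k)"
    by (rule sum.mono_neutral_left) (use a in \<open>auto simp: coeff_eq_0\<close>)
  finally show ?thesis .
qed

lemma coeff_pstar: "coeff (pstar m p) j = (if j \<le> m then cnj (coeff p (m - j)) else 0)"
proof -
  have "coeff (pstar m p) j = (\<Sum>k\<le>m. if k = m - j \<and> j \<le> m then cnj (coeff p k) else 0)"
    unfolding pstar_def coeff_sum coeff_monom by (rule sum.cong) auto
  also have "\<dots> = (if j \<le> m then cnj (coeff p (m - j)) else 0)"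
    by (cases "j \<le> m") (simp_all add: sum.delta)
  finally show ?thesis .
qed

lemma degree_pstar: "degree (pstar m p) \<le> m"
  by (rule degree_le) (simp add: coeff_pstar)

lemma poly_pstar: assumes "degree p \<le> m" "z \<noteq> 0"
  shows "poly (pstar m p) z = z^m * cnj (poly p (1 / cnj z))"
proof -
  have "poly (pstar m p) z = (\<Sum>k\<le>m. cnj (coeff p k) * z^(m-k))"
    unfolding pstar_def poly_sum poly_monom by simp
  also have "\<dots> = (\<Sum>k\<le>m. z^m * (cnj (coeff p k) * (1/z)^k))"
    apply (rule sum.cong, simp)
    using assms(2) by (simp add: power_diff field_simps)
  also have "\<dots> = z^m * cnj (poly p (1 / cnj z))"
    unfolding poly_le_sum[OF assms(1)] sum_distrib_left[symmetric] cnj_sum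
    by simp
  finally show ?thesis .
qed

lemma circ_inv: "cmod z = 1 \<Longrightarrow> 1 / cnj z = z"
proof -
  assume "cmod z = 1"
  then have "z * cnj z = 1" using complex_norm_square[of z] by simp
  then show ?thesis by (metis complex_cnj_zero_iff div_by_1 mult_zero_right nonzero_divide_eq_eq zero_neq_one)
qed

lemma poly_pstar_circ: "degree p \<le> m \<Longrightarrow> cmod z = 1 \<Longrightarrow> poly (pstar m p) z = z^m * cnj (poly p z)"
  using poly_pstar[of p m z] circ_inv[of z] by (cases "z = 0") auto

lemma poly_QQ: "degree Q \<le> d \<Longrightarrow> cmod z = 1 \<Longrightarrow>
   poly (Q * pstar d Q) z = z^d * of_real ((cmod (poly Q z))^2)"
  by (simp only: poly_mult poly_pstar_circ complex_norm_square) (simp add: algebra_simps)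

lemma circle_infinite: "infinite {z::complex. cmod z = 1}"
proof
  assume fin: "finite {z::complex. cmod z = 1}"
  have "{-1..1::real} \<subseteq> Re ` {z::complex. cmod z = 1}"
  proof
    fix r :: real assume r: "r \<in> {-1..1}"
    let ?z = "Complex r (sqrt (1 - r^2))"
    have "r^2 \<le> 1" using r by (auto simp: abs_square_le_1)
    then have "cmod ?z = 1" by (simp add: cmod_def)
    then show "r \<in> Re ` {z::complex. cmod z = 1}" by (intro image_eqI[of _ _ ?z]) auto
  qed
  moreover have "finite (Re ` {z::complex. cmod z = 1})" using fin by simp
  moreover have "infinite {-1..1::real}" by (rule infinite_Icc) simp
  ultimately show False using finite_subset by blast
qed

lemma poly_eq_circle: assumes "\<And>z. cmod z = 1 \<Longrightarrow> poly p z = poly q z" shows "p = q"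
proof (rule ccontr)
  assume "p \<noteq> q"
  then have "p - q \<noteq> 0" by simp
  from poly_roots_finite[OF this] have "finite {z. poly (p - q) z = 0}" .
  moreover have "{z::complex. cmod z = 1} \<subseteq> {z. poly (p - q) z = 0}" using assms by auto
  ultimately show False using circle_infinite finite_subset by blast
qed

lemma lim_real: fixes K :: "real \<Rightarrow> complex"
  assumes "isCont K 0" "\<And>t. 0 < t \<Longrightarrow> t < 1 \<Longrightarrow> Im (K t) = 0 \<and> Re (K t) \<ge> 0"
  shows "Im (K 0) = 0 \<and> Re (K 0) \<ge> 0"
proof -
  define s where "s = (\<lambda>k::nat. inverse (real (Suc k)) / 2)"
  have s0: "s \<longlonglongrightarrow> 0" unfolding s_def
    using tendsto_divide_zero[OF LIMSEQ_inverse_real_of_nat, of 2] by simp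
  have s1: "0 < s k \<and> s k < 1" for k unfolding s_def by (auto simp: field_simps)
  have lim: "(\<lambda>k. K (s k)) \<longlonglongrightarrow> K 0" using isCont_tendsto_compose[OF assms(1) s0] .
  have "(\<lambda>k. Im (K (s k))) \<longlonglongrightarrow> Im (K 0)" using tendsto_Im[OF lim] .
  moreover have "(\<lambda>k. Im (K (s k))) = (\<lambda>k. 0)" using assms(2) s1 by simp
  ultimately have "Im (K 0) = 0" using LIMSEQ_unique LIMSEQ_const_iff by metis
  moreover have "Re (K 0) \<ge> 0"
    using LIMSEQ_le_const[OF tendsto_Re[OF lim], of 0] assms(2) s1 by auto
  ultimately show ?thesis by simp
qed

lemma circ_mult: "cmod z = 1 \<Longrightarrow> z * cnj z = 1"
  using complex_norm_square[of z] by simp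

lemma circ_exp: "cmod (a * exp (\<i> * complex_of_real t)) = cmod a"
  by (simp add: norm_mult)

lemma exp_ne1: assumes "0 < t" "t < 1" shows "exp (\<i> * complex_of_real t) \<noteq> 1"
proof
  assume "exp (\<i> * complex_of_real t) = 1"
  then have "Im (exp (\<i> * complex_of_real t)) = 0" by simp
  moreover have "sin t > 0" using assms by (intro sin_gt_zero) (use pi_ge_two in auto)
  ultimately show False by (simp add: Im_exp)
qed

lemma lim_circ: fixes G :: "complex \<Rightarrow> complex"
  assumes "isCont G a" "cmod a = 1"
    "\<And>z. cmod z = 1 \<Longrightarrow> z \<noteq> a \<Longrightarrow> Im (G z) = 0 \<and> Re (G z) \<ge> 0"
  shows "Im (G a) = 0 \<and> Re (G a) \<ge> 0"
proof -
  define K where "K = (\<lambda>t::real. G (a * exp (\<i> * complex_of_real t)))"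
  have c: "isCont (\<lambda>t::real. a * exp (\<i> * complex_of_real t)) 0" by (intro continuous_intros)
  have "isCont K 0" unfolding K_def
    by (rule isCont_o2[OF c]) (simp add: assms(1))
  moreover have "Im (K t) = 0 \<and> Re (K t) \<ge> 0" if "0 < t" "t < 1" for t
  proof -
    have "a \<noteq> 0" using assms(2) by auto
    then have "a * exp (\<i> * complex_of_real t) \<noteq> a" using exp_ne1[OF that] by simp
    then show ?thesis unfolding K_def using assms(3) circ_exp assms(2) by simp
  qed
  ultimately have "Im (K 0) = 0 \<and> Re (K 0) \<ge> 0" by (rule lim_real)
  then show ?thesis unfolding K_def by simp
qed

lemma double_root:
  assumes a1: "cmod a = 1" and R: "R = [:-a,1:] * R1"
    and H: "\<forall>z. cmod z = 1 \<longrightarrow> (\<exists>r::real. r \<ge> 0 \<and> poly R z = z^d * of_real r)"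
  shows "poly R1 a = 0"
proof -
  define u where "u = (\<lambda>t::real. exp (\<i> * complex_of_real (t/2)))"
  define K where "K = (\<lambda>t. \<i> * u t * a * poly R1 (a * (u t)^2) / (a * (u t)^2)^d)"
  have a0: "a \<noteq> 0" using a1 by auto
  have u1: "cmod (u t) = 1" for t unfolding u_def by simp
  have u0: "u t \<noteq> 0" for t unfolding u_def by simp
  have key: "\<exists>r::real. r \<ge> 0 \<and> of_real (2 * sin (t/2)) * K t = of_real r" for t
  proof -
    let ?z = "a * (u t)^2"
    have "cmod ?z = 1" by (simp add: norm_mult norm_power u1 a1)
    then obtain r where r: "r \<ge> 0" "poly R ?z = ?z^d * of_real r" using H by blast
    have z0: "?z \<noteq> 0" using a0 u0 by simp
    have e1: "poly R ?z = (?z - a) * poly R1 ?z" unfolding R poly_mult by simp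
    have e2: "?z - a = a * u t * (u t - cnj (u t))" using circ_mult[OF u1[of t]]
      by (simp add: algebra_simps power2_eq_square)
    have e3: "u t - cnj (u t) = of_real (2 * sin (t/2)) * \<i>"
      by (simp add: complex_diff_cnj u_def Im_exp)
    have "poly R ?z = of_real (2 * sin (t/2)) * K t * ?z^d"
      unfolding e1 e2 e3 K_def using z0 by (simp add: field_simps)
    then have "of_real (2 * sin (t/2)) * K t = of_real r" using r(2) z0 by simp
    then show ?thesis using r(1) by blast
  qed
  have pos: "Im (K t) = 0 \<and> Re (K t) \<ge> 0" if "0 < t" "t < 1" for t
  proof -
    have s: "sin (t/2) > 0" using that by (intro sin_gt_zero) (use pi_ge_two in auto)
    obtain r where r: "r \<ge> 0" "of_real (2 * sin (t/2)) * K t = of_real r" using key by blast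
    then have "K t = of_real (r / (2 * sin (t/2)))" using s by (simp add: field_simps)
    then show ?thesis using r(1) s by simp
  qed
  have neg: "Im (- K (-t)) = 0 \<and> Re (- K (-t)) \<ge> 0" if "0 < t" "t < 1" for t
  proof -
    have s: "sin (t/2) > 0" using that by (intro sin_gt_zero) (use pi_ge_two in auto)
    obtain r where r: "r \<ge> 0" "of_real (2 * sin ((-t)/2)) * K (-t) = of_real r" using key by blast
    then have "- K (-t) = of_real (r / (2 * sin (t/2)))" using s by (simp add: field_simps)
    then show ?thesis using r(1) s by simp
  qed
  have cK: "isCont K t" for t
    unfolding K_def u_def using a0 by (intro continuous_intros) auto
  have cK2: "isCont (\<lambda>t. - K (-t)) 0"
  proof -
    have "isCont (\<lambda>t::real. K (-t)) 0"
      using isCont_o2[where f="\<lambda>t::real. -t" and a=0 and g=K] cK by (auto intro: continuous_intros)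
    then show ?thesis by (intro continuous_intros)
  qed
  have r1: "Im (K 0) = 0 \<and> Re (K 0) \<ge> 0" by (rule lim_real[OF cK pos])
  have r2: "Im (- K (-0)) = 0 \<and> Re (- K (-0)) \<ge> 0" by (rule lim_real[OF cK2 neg])
  have "K 0 = 0" using r1 r2 by (simp add: complex_eq_iff)
  then show ?thesis unfolding K_def u_def using a0 by simp
qed

lemma sym_R:
  assumes "degree R \<le> 2*d"
    and H: "\<forall>z. cmod z = 1 \<longrightarrow> (\<exists>r::real. r \<ge> 0 \<and> poly R z = z^d * of_real r)"
  shows "R = pstar (2*d) R"
proof (rule poly_eq_circle)
  fix z :: complex assume z: "cmod z = 1"
  then obtain r where r: "poly R z = z^d * of_real r" using H by blast
  have "poly (pstar (2*d) R) z = z^(2*d) * cnj (poly R z)" using poly_pstar_circ[OF assms(1) z] .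
  also have "\<dots> = z^d * (z * cnj z)^d * of_real r" unfolding r
    by (simp add: power_mult_distrib mult_2 power_add)
  also have "\<dots> = poly R z" using circ_mult[OF z] r by simp
  finally show "poly R z = poly (pstar (2*d) R) z" by simp
qed

lemma two_factor:
  assumes z: "cmod z = 1" and a0: "a \<noteq> 0"
  shows "poly [:-a,1:] z * poly [:-(1 / cnj a),1:] z = - (z / cnj a) * of_real ((cmod (z - a))^2)"
proof -
  have z0: "z \<noteq> 0" using z by auto
  have cz: "cnj z = 1 / z" using circ_mult[OF z] z0 by (simp add: field_simps)
  have ca: "cnj a \<noteq> 0" using a0 by simp
  show ?thesis unfolding complex_norm_square complex_cnj_diff cz
    using z0 ca by (simp add: field_simps)
qed

lemma FR:
  "degree R \<le> 2*d \<Longrightarrow> (\<forall>z. cmod z = 1 \<longrightarrow> (\<exists>r::real. r \<ge> 0 \<and> poly R z = z^d * of_real r))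
   \<Longrightarrow> \<exists>Q. degree Q \<le> d \<and> R = Q * pstar d Q"
proof (induction d arbitrary: R)
  case 0
  obtain r where r: "r \<ge> 0" "poly R 1 = of_real r" using "0.prems"(2)[rule_format, of 1] by auto
  have R0: "R = [:coeff R 0:]" using "0.prems"(1) degree_0_id[of R] by simp
  define Q where "Q = [:complex_of_real (sqrt r):]"
  have "R = Q * pstar 0 Q"
  proof (rule poly_eq_circle)
    fix z :: complex assume z: "cmod z = 1"
    have "poly (Q * pstar 0 Q) z = of_real ((cmod (poly Q z))^2)"
      using poly_QQ[of Q 0 z] z by (simp add: Q_def)
    also have "\<dots> = of_real r" using r(1) by (simp add: Q_def)
    also have "\<dots> = poly R z" using r(2) R0 by (metis poly_pCons poly_0 mult_zero_right add_0_right)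
    finally show "poly R z = poly (Q * pstar 0 Q) z" by simp
  qed
  moreover have "degree Q \<le> 0" by (simp add: Q_def)
  ultimately show ?case by blast
next
  case (Suc d)
  note H = Suc.prems(2)
  have sym: "R = pstar (2 * Suc d) R" by (rule sym_R[OF Suc.prems])
  have top: "coeff R (2 * Suc d) = cnj (coeff R 0)"
    by (subst sym) (simp add: coeff_pstar)
  show ?case
  proof (cases "coeff R 0 = 0")
    case True
    obtain c R1 where R1: "R = pCons c R1" by (rule pCons_cases)
    have c0: "c = 0" using True R1 by simp
    have degR1: "degree R1 \<le> 2 * d"
    proof (rule degree_le, intro allI impI)
      fix i assume i: "2 * d < i"
      have "coeff R1 i = coeff R (Suc i)" using R1 by simp
      moreover have "coeff R (Suc i) = 0"
      proof (cases "Suc i = 2 * Suc d")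
        case True then show ?thesis using top \<open>coeff R 0 = 0\<close> by simp
      next
        case False then have "Suc i > degree R" using i Suc.prems(1) by simp
        then show ?thesis by (rule coeff_eq_0)
      qed
      ultimately show "coeff R1 i = 0" by simp
    qed
    have H1: "\<forall>z. cmod z = 1 \<longrightarrow> (\<exists>r::real. r \<ge> 0 \<and> poly R1 z = z^d * of_real r)"
    proof (intro allI impI)
      fix z :: complex assume z: "cmod z = 1"
      then obtain r where r: "r \<ge> 0" "poly R z = z^Suc d * of_real r" using H by blast
      have z0: "z \<noteq> 0" using z by auto
      have "z * poly R1 z = z * (z^d * of_real r)" using r(2) R1 c0 by simp
      then show "\<exists>r::real. r \<ge> 0 \<and> poly R1 z = z^d * of_real r" using r(1) z0 by auto
    qed
    obtain Q where Q: "degree Q \<le> d" "R1 = Q * pstar d Q" using Suc.IH[OF degR1 H1] by blast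
    have QS: "degree Q \<le> Suc d" using Q(1) by simp
    have "R = Q * pstar (Suc d) Q"
    proof (rule poly_eq_circle)
      fix z :: complex assume z: "cmod z = 1"
      have "poly R z = z * poly R1 z" using R1 c0 by simp
      also have "\<dots> = z * (z^d * of_real ((cmod (poly Q z))^2))" using poly_QQ[OF Q(1) z] Q(2) by simp
      also have "\<dots> = poly (Q * pstar (Suc d) Q) z" using poly_QQ[OF QS z] by simp
      finally show "poly R z = poly (Q * pstar (Suc d) Q) z" .
    qed
    then show ?thesis using QS by blast
  next
    case False
    have R0: "R \<noteq> 0" using False by auto
    have degR: "degree R = 2 * Suc d"
      using Suc.prems(1) top False le_degree[of R "2 * Suc d"] by auto
    then have "\<not> constant (poly R)" by (simp add: constant_degree)
    then obtain a where a: "poly R a = 0" using fundamental_theorem_of_algebra by blast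
    have a0: "a \<noteq> 0" using a False by (auto simp: poly_0_coeff_0)
    define b where "b = 1 / cnj a"
    obtain R1 where R1: "R = [:-a,1:] * R1" using a by (auto simp: poly_eq_0_iff_dvd dvd_def)
    obtain R2 where R2: "R = [:-a,1:] * [:-b,1:] * R2"
    proof (cases "a = b")
      case True
      have "cmod a = 1"
      proof -
        have "a * cnj a = 1" using True a0 by (simp add: b_def field_simps)
        then have "(cmod a)^2 = 1" using complex_norm_square[of a] by (metis of_real_eq_1_iff)
        then show ?thesis using norm_ge_zero[of a] by (auto simp: power2_eq_1_iff)
      qed
      from double_root[OF this R1 H] have "poly R1 a = 0" .
      then obtain R2 where e: "R1 = [:-a,1:] * R2" by (auto simp: poly_eq_0_iff_dvd dvd_def)
      have "R = [:-a,1:] * [:-b,1:] * R2" unfolding R1 e True[symmetric] by (simp only: mult.assoc)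
      then show ?thesis by (rule that)
    next
      case False
      have b0: "b \<noteq> 0" using a0 by (simp add: b_def)
      have "poly R b = 0"
      proof -
        have "poly R b = poly (pstar (2 * Suc d) R) b" using sym by simp
        also have "\<dots> = b^(2 * Suc d) * cnj (poly R (1 / cnj b))"
          by (rule poly_pstar) (use Suc.prems(1) b0 in auto)
        also have "1 / cnj b = a" by (simp add: b_def)
        finally show ?thesis using a by simp
      qed
      then have "poly R1 b = 0" using R1 False by simp
      then obtain R2 where e: "R1 = [:-b,1:] * R2" by (auto simp: poly_eq_0_iff_dvd dvd_def)
      have "R = [:-a,1:] * [:-b,1:] * R2" unfolding R1 e by (simp only: mult.assoc)
      then show ?thesis by (rule that)
    qed
    have R2nz: "R2 \<noteq> 0" using R0 R2 by auto
    have "degree R = 2 + degree R2" unfolding R2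
      using R2nz by (subst degree_mult_eq) (auto simp: degree_mult_eq)
    then have degR2: "degree R2 = 2 * d" using degR by simp
    define R3 where "R3 = smult (-1 / cnj a) R2"
    have degR3: "degree R3 \<le> 2 * d" using degR2 by (simp add: R3_def)
    have Rz: "poly R z = z * of_real ((cmod (z - a))^2) * poly R3 z" if z: "cmod z = 1" for z
    proof -
      have "poly R z = (poly [:-a,1:] z * poly [:-b,1:] z) * poly R2 z" by (simp only: R2 poly_mult)
      also have "\<dots> = - (z / cnj a) * of_real ((cmod (z - a))^2) * poly R2 z"
        unfolding b_def two_factor[OF z a0] ..
      also have "\<dots> = z * of_real ((cmod (z - a))^2) * poly R3 z"
        using a0 by (simp add: R3_def field_simps)
      finally show ?thesis .
    qed
    define G where "G = (\<lambda>z. poly R3 z / z^d)"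
    have Gpos: "Im (G z) = 0 \<and> Re (G z) \<ge> 0" if z: "cmod z = 1" "z \<noteq> a" for z
    proof -
      obtain r where r: "r \<ge> 0" "poly R z = z^Suc d * of_real r" using H z(1) by blast
      have z0: "z \<noteq> 0" using z by auto
      have za: "cmod (z - a) \<noteq> 0" using z(2) by simp
      have "z * of_real ((cmod (z - a))^2) * poly R3 z = z * z^d * of_real r" using r(2) Rz[OF z(1)] by simp
      then have "G z = of_real (r / (cmod (z - a))^2)"
        using z0 za unfolding G_def by (simp add: field_simps)
      then show ?thesis using r(1) by simp
    qed
    have H3: "\<forall>z. cmod z = 1 \<longrightarrow> (\<exists>r::real. r \<ge> 0 \<and> poly R3 z = z^d * of_real r)"
    proof (intro allI impI)
      fix z :: complex assume z: "cmod z = 1"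
      have z0: "z \<noteq> 0" using z by auto
      have g: "Im (G z) = 0 \<and> Re (G z) \<ge> 0"
      proof (cases "z = a")
        case True
        have "isCont G a" unfolding G_def using a0 by (intro continuous_intros) auto
        then show ?thesis using lim_circ[where G=G and a=a] Gpos z True by blast
      next
        case False then show ?thesis using Gpos z by blast
      qed
      then have "G z = of_real (Re (G z))" by (simp add: complex_eq_iff)
      then have "poly R3 z = z^d * of_real (Re (G z))" using z0 unfolding G_def by (simp add: field_simps)
      then show "\<exists>r::real. r \<ge> 0 \<and> poly R3 z = z^d * of_real r" using g by blast
    qed
    obtain Q2 where Q2: "degree Q2 \<le> d" "R3 = Q2 * pstar d Q2" using Suc.IH[OF degR3 H3] by blast
    define Q where "Q = [:-a,1:] * Q2"
    have degQ: "degree Q \<le> Suc d"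
    proof -
      have "degree Q \<le> degree [:-a,1:] + degree Q2" unfolding Q_def by (rule degree_mult_le)
      then show ?thesis using Q2(1) by simp
    qed
    have "R = Q * pstar (Suc d) Q"
    proof (rule poly_eq_circle)
      fix z :: complex assume z: "cmod z = 1"
      have "poly R z = z * of_real ((cmod (z - a))^2) * (z^d * of_real ((cmod (poly Q2 z))^2))"
        using Rz[OF z] poly_QQ[OF Q2(1) z] Q2(2) by simp
      also have "\<dots> = z^Suc d * of_real ((cmod (poly Q z))^2)"
      proof -
        have "poly Q z = (z - a) * poly Q2 z" unfolding Q_def by (simp add: algebra_simps)
        then have "(cmod (poly Q z))^2 = (cmod (z-a))^2 * (cmod (poly Q2 z))^2"
          by (simp add: norm_mult power_mult_distrib)
        then show ?thesis by (simp add: algebra_simps)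
      qed
      also have "\<dots> = poly (Q * pstar (Suc d) Q) z" using poly_QQ[OF degQ z] by simp
      finally show "poly R z = poly (Q * pstar (Suc d) Q) z" .
    qed
    then show ?thesis using degQ by blast
  qed
qed



lemma qbit_bit: "qbit k i = (if bit i k then 1 else 0)"
  unfolding qbit_def bit_nat_def by (auto elim: oddE)

lemma qbit_le: "qbit k i < 2" unfolding qbit_def by simp

lemma mod_eq_bits: "(i::nat) mod 2^n = j mod 2^n \<longleftrightarrow> (\<forall>k<n. qbit k i = qbit k j)"
proof -
  have "i mod 2^n = j mod 2^n \<longleftrightarrow> take_bit n i = take_bit n j" by (simp add: take_bit_nat_def)
  also have "\<dots> \<longleftrightarrow> (\<forall>k<n. bit i k = bit j k)"
    apply (simp add: bit_eq_iff bit_take_bit_iff) by blast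
  also have "\<dots> \<longleftrightarrow> (\<forall>k<n. qbit k i = qbit k j)"
    unfolding qbit_bit by (auto split: if_splits)
  finally show ?thesis .
qed

lemma qbit_mod: "k < n \<Longrightarrow> qbit k (i mod 2^n) = qbit k i"
  by (simp add: qbit_bit flip: take_bit_nat_def add: bit_take_bit_iff)

lemma qbit_top: "(i::nat) < 2^Suc n \<Longrightarrow> qbit n i = i div 2^n"
  unfolding qbit_def by (simp add: less_mult_imp_div_less)

lemma div_lt2: "(i::nat) < 2^Suc n \<Longrightarrow> i div 2^n < 2"
  by (simp add: less_mult_imp_div_less)

lemma eq_iff_mod_div: "(i::nat) = j \<longleftrightarrow> i mod 2^n = j mod 2^n \<and> i div 2^n = j div 2^n"
  by (metis div_mult_mod_eq)

lemma eq_bits: assumes "(i::nat) < 2^Suc n" "j < 2^Suc n"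
  shows "i = j \<longleftrightarrow> (\<forall>k<Suc n. qbit k i = qbit k j)"
proof -
  have "i = j \<longleftrightarrow> i mod 2^Suc n = j mod 2^Suc n" using assms by simp
  then show ?thesis by (simp only: mod_eq_bits)
qed

definition blk :: "nat \<Rightarrow> complex mat \<Rightarrow> (nat \<Rightarrow> nat \<Rightarrow> nat \<Rightarrow> complex) \<Rightarrow> bool" where
  "blk n M V \<longleftrightarrow> M \<in> carrier_mat (2^Suc n) (2^Suc n) \<and>
     (\<forall>i<2^Suc n. \<forall>j<2^Suc n. M $$ (i,j) =
        (if i mod 2^n = j mod 2^n then V (i mod 2^n) (i div 2^n) (j div 2^n) else 0))"

lemma blk_cong: "blk n M V \<Longrightarrow> (\<And>x a b. x < 2^n \<Longrightarrow> a < 2 \<Longrightarrow> b < 2 \<Longrightarrow> V x a b = W x a b) \<Longrightarrow> blk n M W"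
  unfolding blk_def by (auto simp: div_lt2)

lemma blk_one: "blk n (1\<^sub>m (2^Suc n)) (\<lambda>x a b. if a = b then 1 else 0)"
  unfolding blk_def
proof (intro conjI allI impI)
  fix i j :: nat assume "i < 2^Suc n" "j < 2^Suc n"
  then show "1\<^sub>m (2^Suc n) $$ (i,j) = (if i mod 2^n = j mod 2^n then (if i div 2^n = j div 2^n then 1 else 0) else 0)"
    using eq_iff_mod_div[of i j n] by auto
qed simp

lemma sum_split2: "(\<Sum>l = 0..<2 * (N::nat). f l) = (\<Sum>l = 0..<N. f l) + (\<Sum>l = 0..<N. f (l + N))"
proof -
  have "(\<Sum>l = 0..<2 * N. f l) = (\<Sum>l = 0..<N. f l) + (\<Sum>l = N..<2*N. f l)"
    by (rule sum.atLeastLessThan_concat[symmetric]) auto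
  also have "(\<Sum>l = N..<2*N. f l) = (\<Sum>l = 0..<N. f (l + N))"
    using sum.shift_bounds_nat_ivl[of f 0 N N] by (simp add: mult_2)
  finally show ?thesis .
qed

lemma blk_mult:
  assumes A: "blk n A V" and B: "blk n B W"
  shows "blk n (A * B) (\<lambda>x a b. V x a 0 * W x 0 b + V x a 1 * W x 1 b)"
  unfolding blk_def
proof (intro conjI allI impI)
  show "A * B \<in> carrier_mat (2^Suc n) (2^Suc n)" using A B unfolding blk_def by auto
next
  fix i j :: nat assume i: "i < 2^Suc n" and j: "j < 2^Suc n"
  let ?N = "2^n :: nat"
  have dA: "dim_row A = 2^Suc n" "dim_col A = 2^Suc n" and dB: "dim_row B = 2^Suc n" "dim_col B = 2^Suc n"
    using A B unfolding blk_def by auto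
  have eA: "A $$ (i,l) = (if i mod ?N = l mod ?N then V (i mod ?N) (i div ?N) (l div ?N) else 0)"
    if "l < 2^Suc n" for l :: nat using A i that unfolding blk_def by blast
  have eB: "B $$ (l,j) = (if l mod ?N = j mod ?N then W (l mod ?N) (l div ?N) (j div ?N) else 0)"
    if "l < 2^Suc n" for l :: nat using B j that unfolding blk_def by blast
  have "(A * B) $$ (i,j) = (\<Sum>l = 0..<2 * ?N. A $$ (i,l) * B $$ (l,j))"
    using i j dA dB by (simp add: scalar_prod_def)
  also have "\<dots> = (\<Sum>l = 0..<?N. A $$ (i,l) * B $$ (l,j)) + (\<Sum>l = 0..<?N. A $$ (i,l + ?N) * B $$ (l + ?N,j))"
    by (rule sum_split2)
  also have "(\<Sum>l = 0..<?N. A $$ (i,l) * B $$ (l,j)) =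
      (\<Sum>l = 0..<?N. if l = i mod ?N then (if i mod ?N = j mod ?N then V (i mod ?N) (i div ?N) 0 * W (i mod ?N) 0 (j div ?N) else 0) else 0)"
    by (rule sum.cong) (auto simp: eA eB)
  also have "(\<Sum>l = 0..<?N. A $$ (i,l + ?N) * B $$ (l + ?N,j)) =
      (\<Sum>l = 0..<?N. if l = i mod ?N then (if i mod ?N = j mod ?N then V (i mod ?N) (i div ?N) 1 * W (i mod ?N) 1 (j div ?N) else 0) else 0)"
    by (rule sum.cong) (auto simp: eA eB)
  finally show "(A * B) $$ (i,j) = (if i mod ?N = j mod ?N then
      V (i mod ?N) (i div ?N) 0 * W (i mod ?N) 0 (j div ?N) + V (i mod ?N) (i div ?N) 1 * W (i mod ?N) 1 (j div ?N) else 0)"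
    by (simp add: sum.delta)
qed

lemma gate_carrier: "gate_mat m g \<in> carrier_mat (2^m) (2^m)"
  by (cases g) auto

lemma foldl_carrier: "M0 \<in> carrier_mat (2^m) (2^m) \<Longrightarrow>
  foldl (\<lambda>M g. gate_mat m g * M) M0 gs \<in> carrier_mat (2^m) (2^m)"
proof (induction gs arbitrary: M0)
  case (Cons g gs)
  then show ?case using gate_carrier[of m g] by simp
qed simp

lemma circ_carrier: "circuit_mat m gs \<in> carrier_mat (2^m) (2^m)"
  unfolding circuit_mat_def by (rule foldl_carrier) simp

lemma foldl_circ: "M0 \<in> carrier_mat (2^m) (2^m) \<Longrightarrow>
  foldl (\<lambda>M g. gate_mat m g * M) M0 gs = circuit_mat m gs * M0"
proof (induction gs arbitrary: M0)
  case Nil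
  then show ?case by (simp add: circuit_mat_def)
next
  case (Cons g gs)
  have G: "gate_mat m g \<in> carrier_mat (2^m) (2^m)" by (rule gate_carrier)
  have "foldl (\<lambda>M g. gate_mat m g * M) M0 (g # gs) = circuit_mat m gs * (gate_mat m g * M0)"
    using Cons G by simp
  moreover have "circuit_mat m (g # gs) = circuit_mat m gs * gate_mat m g"
    unfolding circuit_mat_def using Cons.IH[of "gate_mat m g * 1\<^sub>m (2^m)"] G
    by (simp add: circuit_mat_def)
  ultimately show ?case using G Cons.prems circ_carrier[of m gs] by (simp add: assoc_mult_mat)
qed

lemma circuit_append: "circuit_mat m (xs @ ys) = circuit_mat m ys * circuit_mat m xs"
proof -
  have "circuit_mat m (xs @ ys) = foldl (\<lambda>M g. gate_mat m g * M) (circuit_mat m xs) ys"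
    by (simp add: circuit_mat_def)
  also have "\<dots> = circuit_mat m ys * circuit_mat m xs" by (rule foldl_circ[OF circ_carrier])
  finally show ?thesis .
qed

lemma circuit_single: "circuit_mat m [g] = gate_mat m g"
  unfolding circuit_mat_def using gate_carrier[of m g] by simp

lemma blk_G1: "blk n (gate_mat (Suc n) (G1 n U)) (\<lambda>x a b. U $$ (a,b))"
  unfolding blk_def
proof (intro conjI allI impI)
  fix i j :: nat assume i: "i < 2^Suc n" and j: "j < 2^Suc n"
  have c: "(\<forall>k<Suc n. k \<noteq> n \<longrightarrow> qbit k i = qbit k j) \<longleftrightarrow> i mod 2^n = j mod 2^n"
    unfolding mod_eq_bits using less_Suc_eq by auto
  show "gate_mat (Suc n) (G1 n U) $$ (i, j) =
    (if i mod 2 ^ n = j mod 2 ^ n then U $$ (i div 2 ^ n, j div 2 ^ n) else 0)"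
  proof -
    have "gate_mat (Suc n) (G1 n U) $$ (i, j) = (if (\<forall>k<Suc n. k \<noteq> n \<longrightarrow> qbit k i = qbit k j)
       then U $$ (qbit n i, qbit n j) else 0)" using i j by simp
    then show ?thesis unfolding c qbit_top[OF i] qbit_top[OF j] .
  qed
qed simp

definition ph :: "real \<Rightarrow> complex mat" where
  "ph \<theta> = mat 4 4 (\<lambda>(r,s). if r = s then (if r = 1 then exp (\<i> * complex_of_real \<theta>) else 1) else 0)"

lemma blk_ph: assumes k: "k < n"
  shows "blk n (gate_mat (Suc n) (G2 n k (ph \<theta>)))
    (\<lambda>x a b. if a = b then (if a = 0 \<and> qbit k x = 1 then exp (\<i> * complex_of_real \<theta>) else 1) else 0)"
  unfolding blk_def
proof (intro conjI allI impI)
  fix i j :: nat assume i: "i < 2^Suc n" and j: "j < 2^Suc n"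
  let ?C = "\<forall>k'<Suc n. k' \<noteq> n \<and> k' \<noteq> k \<longrightarrow> qbit k' i = qbit k' j"
  let ?r = "2 * qbit n i + qbit k i" and ?s = "2 * qbit n j + qbit k j"
  have r4: "?r < 4" "?s < 4" using qbit_le[of n i] qbit_le[of k i] qbit_le[of n j] qbit_le[of k j] by auto
  have ceq: "?C \<and> ?r = ?s \<longleftrightarrow> i = j"
  proof
    assume h: "?C \<and> ?r = ?s"
    have ar: "\<And>a b c e::nat. a<2 \<Longrightarrow> b<2 \<Longrightarrow> c<2 \<Longrightarrow> e<2 \<Longrightarrow> 2*a+b = 2*c+e \<Longrightarrow> a=c \<and> b=e"
      by presburger
    from h have "qbit n i = qbit n j \<and> qbit k i = qbit k j"
      using ar[OF qbit_le[of n i] qbit_le[of k i] qbit_le[of n j] qbit_le[of k j]] by blast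
    then have "\<forall>k'<Suc n. qbit k' i = qbit k' j" using h by metis
    then show "i = j" using eq_bits[OF i j] by blast
  qed simp
  have "gate_mat (Suc n) (G2 n k (ph \<theta>)) $$ (i, j) = (if ?C then ph \<theta> $$ (?r, ?s) else 0)"
    using i j by simp
  also have "\<dots> = (if ?C \<and> ?r = ?s then (if ?r = 1 then exp (\<i> * complex_of_real \<theta>) else 1) else 0)"
    using r4 by (auto simp: ph_def)
  also have "\<dots> = (if i = j then (if qbit n i = 0 \<and> qbit k i = 1 then exp (\<i> * complex_of_real \<theta>) else 1) else 0)"
  proof -
    have "2 * qbit n i + qbit k i = 1 \<longleftrightarrow> qbit n i = 0 \<and> qbit k i = 1" by presburger
    then show ?thesis unfolding ceq by (cases "i = j") simp_all
  qed
  also have "\<dots> = (if i mod 2 ^ n = j mod 2 ^ n then (if i div 2^n = j div 2^n then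
     (if i div 2^n = 0 \<and> qbit k (i mod 2^n) = 1 then exp (\<i> * complex_of_real \<theta>) else 1) else 0) else 0)"
    using eq_iff_mod_div[of i j n] qbit_top[OF i] qbit_mod[OF k] by auto
  finally show "gate_mat (Suc n) (G2 n k (ph \<theta>)) $$ (i, j) = (if i mod 2 ^ n = j mod 2 ^ n then (if i div 2^n = j div 2^n then
     (if i div 2^n = 0 \<and> qbit k (i mod 2^n) = 1 then exp (\<i> * complex_of_real \<theta>) else 1) else 0) else 0)" .
qed simp

definition omg :: "nat \<Rightarrow> nat \<Rightarrow> complex" where
  "omg n x = exp (\<i> * complex_of_real (2 * pi * real x / 2^n))"

definition phases :: "nat \<Rightarrow> nat \<Rightarrow> gate list" where
  "phases n m = map (\<lambda>k. G2 n k (ph (2 * pi * 2^k / 2^n))) [0..<m]"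

lemma omg_step: "omg n (x mod 2^Suc m) =
   (if qbit m x = 1 then exp (\<i> * complex_of_real (2 * pi * 2^m / 2^n)) else 1) * omg n (x mod 2^m)"
proof -
  have xm: "x mod 2^Suc m = x mod 2^m + 2^m * qbit m x"
    unfolding qbit_def power_Suc2 mod_mult2_eq by simp
  show ?thesis
  proof (cases "qbit m x = 1")
    case True
    have "complex_of_real (2 * pi * real (x mod 2^Suc m) / 2^n) =
      complex_of_real (2 * pi * 2^m / 2^n) + complex_of_real (2 * pi * real (x mod 2^m) / 2^n)"
      unfolding xm True by (simp add: field_simps)
    then show ?thesis using True unfolding omg_def by (simp add: distrib_left exp_add)
  next
    case False
    then have "qbit m x = 0" using qbit_le[of m x] by simp
    then show ?thesis using False unfolding omg_def xm by simp
  qed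
qed

lemma blk_phases: "m \<le> n \<Longrightarrow> blk n (circuit_mat (Suc n) (phases n m))
   (\<lambda>x a b. if a = b then (if a = 0 then omg n (x mod 2^m) else 1) else 0)"
proof (induction m)
  case 0
  have "circuit_mat (Suc n) (phases n 0) = 1\<^sub>m (2^Suc n)" by (simp add: phases_def circuit_mat_def)
  then show ?case
    by (simp only:) (rule blk_cong[OF blk_one[of n]], auto simp: omg_def)
next
  case (Suc m)
  have e: "circuit_mat (Suc n) (phases n (Suc m)) =
     gate_mat (Suc n) (G2 n m (ph (2 * pi * 2^m / 2^n))) * circuit_mat (Suc n) (phases n m)"
    unfolding phases_def by (simp add: circuit_append circuit_single)
  have m: "m < n" using Suc.prems by simp
  show ?case unfolding e
    apply (rule blk_cong[OF blk_mult[OF blk_ph[OF m] Suc.IH]])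
    using Suc.prems apply simp
    apply (auto simp: omg_step[simplified])
    done
qed



definition u2 :: "complex \<Rightarrow> complex \<Rightarrow> complex mat" where
  "u2 a c = mat 2 2 (\<lambda>(i,j). if i = 0 then (if j = 0 then a else - cnj c) else (if j = 0 then c else cnj a))"

lemma less2: "(i::nat) < 2 \<longleftrightarrow> i = 0 \<or> i = 1" by auto
lemma less4: "(i::nat) < 4 \<longleftrightarrow> i = 0 \<or> i = 1 \<or> i = 2 \<or> i = 3" by auto

lemma sum2: "(\<Sum>i = 0..<2. f i) = f 0 + f (1::nat)"
  by (simp add: eval_nat_numeral sum.atLeast0_lessThan_Suc)
lemma sum4: "(\<Sum>i = 0..<4. f i) = f 0 + f (1::nat) + f 2 + f 3"
  by (simp add: eval_nat_numeral sum.atLeast0_lessThan_Suc)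

lemma unitary_u2: assumes "a * cnj a + c * cnj c = 1" shows "unitary_mat 2 (u2 a c)"
proof -
  have e: "cnj a * a + cnj c * c = 1" "c * cnj c + a * cnj a = 1" "cnj c * c + cnj a * a = 1"
    using assms by (simp_all add: algebra_simps)
  show ?thesis
  unfolding unitary_mat_def adjoint_mat_def
  by (auto intro!: eq_matI simp: u2_def scalar_prod_def sum2 less2 assms e algebra_simps)
qed

lemma unitary_ph: "unitary_mat 4 (ph \<theta>)"
proof -
  have e: "exp (\<i> * complex_of_real \<theta>) * cnj (exp (\<i> * complex_of_real \<theta>)) = 1"
    using complex_norm_square[of "exp (\<i> * complex_of_real \<theta>)"] by simp
  have e2: "cnj (exp (\<i> * complex_of_real \<theta>)) * exp (\<i> * complex_of_real \<theta>) = 1"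
    using e by (simp add: mult.commute)
  show ?thesis
  unfolding unitary_mat_def adjoint_mat_def
  by (auto intro!: eq_matI simp: ph_def scalar_prod_def sum4 less4 e e2)
qed

lemma orth:
  assumes dP: "degree P \<le> Suc d" and dQ: "degree Q \<le> Suc d"
    and H: "\<forall>z. cmod z = 1 \<longrightarrow> (cmod (poly P z))^2 + (cmod (poly Q z))^2 = 1"
  shows "coeff P (Suc d) * cnj (coeff P 0) + coeff Q (Suc d) * cnj (coeff Q 0) = 0"
proof -
  let ?H = "P * pstar (Suc d) P + Q * pstar (Suc d) Q"
  have "?H = monom 1 (Suc d)"
  proof (rule poly_eq_circle)
    fix z :: complex assume z: "cmod z = 1"
    have "poly ?H z = z^Suc d * of_real ((cmod (poly P z))^2 + (cmod (poly Q z))^2)"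
      using poly_QQ[OF dP z] poly_QQ[OF dQ z] by (simp add: distrib_left)
    also have "\<dots> = poly (monom 1 (Suc d)) z" using H z by (simp add: poly_monom)
    finally show "poly ?H z = poly (monom 1 (Suc d)) z" .
  qed
  then have "coeff ?H 0 = 0" by (metis coeff_monom nat.distinct(1))
  then have "coeff P 0 * cnj (coeff P (Suc d)) + coeff Q 0 * cnj (coeff Q (Suc d)) = 0"
    by (simp add: coeff_mult_0 coeff_pstar)
  then have "cnj (coeff P 0 * cnj (coeff P (Suc d)) + coeff Q 0 * cnj (coeff Q (Suc d))) = 0" by simp
  then show ?thesis by (simp add: mult.commute)
qed

lemma norm2: assumes "x \<noteq> 0 \<or> y \<noteq> 0"
  shows "\<exists>\<nu>::complex. \<nu> \<noteq> 0 \<and> cnj \<nu> = \<nu> \<and> \<nu> * \<nu> = x * cnj x + y * cnj y"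
proof -
  define s where "s = (cmod x)^2 + (cmod y)^2"
  have "(cmod x)^2 > 0 \<or> (cmod y)^2 > 0" using assms by auto
  then have s0: "s > 0" unfolding s_def using zero_le_power2[of "cmod x"] zero_le_power2[of "cmod y"] by linarith
  define \<nu> where "\<nu> = complex_of_real (sqrt s)"
  have "sqrt s * sqrt s = s" using s0 by simp
  then have "\<nu> * \<nu> = complex_of_real s" unfolding \<nu>_def by (metis of_real_mult)
  also have "\<dots> = x * cnj x + y * cnj y" unfolding s_def by (simp only: of_real_add complex_norm_square)
  finally show ?thesis using s0 by (intro exI[of _ \<nu>]) (auto simp: \<nu>_def)
qed

lemma choose_ac:
  assumes o: "pd * cnj p0 + qd * cnj q0 = 0"
  shows "\<exists>a c. a * cnj a + c * cnj c = 1 \<and> cnj a * p0 + cnj c * q0 = 0 \<and> - c * pd + a * qd = 0"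
proof (cases "p0 \<noteq> 0 \<or> q0 \<noteq> 0")
  case True
  obtain \<nu> where v: "\<nu> \<noteq> 0" "cnj \<nu> = \<nu>" "\<nu> * \<nu> = p0 * cnj p0 + q0 * cnj q0" using norm2[OF True] by blast
  define a where "a = cnj q0 / \<nu>"
  define c where "c = - cnj p0 / \<nu>"
  have "a * cnj a + c * cnj c = (p0 * cnj p0 + q0 * cnj q0) / (\<nu> * \<nu>)"
    unfolding a_def c_def using v(1,2) by (simp add: field_simps)
  also have "\<dots> = 1" using v(1,3) by (metis divide_self mult_eq_0_iff)
  finally have 1: "a * cnj a + c * cnj c = 1" .
  have 2: "cnj a * p0 + cnj c * q0 = 0" unfolding a_def c_def using v(1,2) by (simp add: field_simps)
  have 3: "- c * pd + a * qd = 0" unfolding a_def c_def using v(1) o by (simp add: field_simps)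
  show ?thesis using 1 2 3 by blast
next
  case False
  show ?thesis
  proof (cases "pd \<noteq> 0 \<or> qd \<noteq> 0")
    case True
    obtain \<nu> where v: "\<nu> \<noteq> 0" "cnj \<nu> = \<nu>" "\<nu> * \<nu> = pd * cnj pd + qd * cnj qd" using norm2[OF True] by blast
    define a where "a = pd / \<nu>"
    define c where "c = qd / \<nu>"
    have "a * cnj a + c * cnj c = (pd * cnj pd + qd * cnj qd) / (\<nu> * \<nu>)"
      unfolding a_def c_def using v(1,2) by (simp add: field_simps)
    also have "\<dots> = 1" using v(1,3) by (metis divide_self mult_eq_0_iff)
    finally have 1: "a * cnj a + c * cnj c = 1" .
    have 3: "- c * pd + a * qd = 0" unfolding a_def c_def using v(1) by (simp add: field_simps)
    show ?thesis using 1 3 False by auto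
  next
    case False2: False
    show ?thesis using False False2 by (intro exI[of _ 1] exI[of _ 0]) auto
  qed
qed

lemma norm_rot: "(cnj a * p + cnj c * q) * cnj (cnj a * p + cnj c * q) + (- c * p + a * q) * cnj (- c * p + a * q)
   = (a * cnj a + c * cnj c) * (p * cnj p + q * cnj q)"
  by (simp add: algebra_simps)



lemma u2_00: "u2 a c $$ (0,0) = a" and u2_01: "u2 a c $$ (0,1) = - cnj c"
  and u2_10: "u2 a c $$ (1,0) = c" and u2_11: "u2 a c $$ (1,1) = cnj a"
  by (simp_all add: u2_def)

lemma valid_phases: "g \<in> set (phases n n) \<Longrightarrow> valid_gate (Suc n) g"
  unfolding phases_def by (auto simp: unitary_ph)

lemma length_phases: "length (phases n m) = m" by (simp add: phases_def)

lemma qsp: "\<forall>P Q. degree P \<le> d \<longrightarrow> degree Q \<le> d \<longrightarrow>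
   (\<forall>z. cmod z = 1 \<longrightarrow> (cmod (poly P z))^2 + (cmod (poly Q z))^2 = 1) \<longrightarrow>
   (\<exists>gs V. (\<forall>g\<in>set gs. valid_gate (Suc n) g) \<and> length gs = Suc d + d * n \<and>
      blk n (circuit_mat (Suc n) gs) V \<and>
      (\<forall>x<2^n. V x 0 0 = poly P (omg n x) \<and> V x 1 0 = poly Q (omg n x)))"
proof (induction d)
  case 0
  show ?case
  proof (intro allI impI)
    fix P Q :: "complex poly"
    assume dP: "degree P \<le> 0" and dQ: "degree Q \<le> 0"
      and H: "\<forall>z. cmod z = 1 \<longrightarrow> (cmod (poly P z))^2 + (cmod (poly Q z))^2 = 1"
    define p where "p = coeff P 0"
    define q where "q = coeff Q 0"
    have P: "P = [:p:]" using dP degree_0_id[of P] by (simp add: p_def)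
    have Q: "Q = [:q:]" using dQ degree_0_id[of Q] by (simp add: q_def)
    have "(cmod p)^2 + (cmod q)^2 = 1" using H[rule_format, of 1] P Q by simp
    then have "complex_of_real ((cmod p)^2 + (cmod q)^2) = 1" by simp
    then have u: "p * cnj p + q * cnj q = 1" by (simp only: of_real_add complex_norm_square)
    let ?gs = "[G1 n (u2 p q)]"
    have "blk n (circuit_mat (Suc n) ?gs) (\<lambda>x a b. u2 p q $$ (a,b))"
      unfolding circuit_single by (rule blk_G1)
    moreover have "\<forall>g\<in>set ?gs. valid_gate (Suc n) g" using unitary_u2[OF u] by simp
    moreover have "length ?gs = Suc 0 + 0 * n" by simp
    ultimately show "\<exists>gs V. (\<forall>g\<in>set gs. valid_gate (Suc n) g) \<and> length gs = Suc 0 + 0 * n \<and>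
      blk n (circuit_mat (Suc n) gs) V \<and>
      (\<forall>x<2^n. V x 0 0 = poly P (omg n x) \<and> V x 1 0 = poly Q (omg n x))"
      using P Q by (intro exI[of _ ?gs] exI[of _ "\<lambda>x a b. u2 p q $$ (a,b)"]) (simp add: u2_def)
  qed
next
  case (Suc d)
  show ?case
  proof (intro allI impI)
    fix P Q :: "complex poly"
    assume dP: "degree P \<le> Suc d" and dQ: "degree Q \<le> Suc d"
      and H: "\<forall>z. cmod z = 1 \<longrightarrow> (cmod (poly P z))^2 + (cmod (poly Q z))^2 = 1"
    have o: "coeff P (Suc d) * cnj (coeff P 0) + coeff Q (Suc d) * cnj (coeff Q 0) = 0"
      by (rule orth[OF dP dQ H])
    obtain a c where ac: "a * cnj a + c * cnj c = 1" "cnj a * coeff P 0 + cnj c * coeff Q 0 = 0"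
      "- c * coeff P (Suc d) + a * coeff Q (Suc d) = 0"
      using choose_ac[OF o] by blast
    define T where "T = smult (cnj a) P + smult (cnj c) Q"
    define B where "B = smult (- c) P + smult a Q"
    have T0: "coeff T 0 = 0" using ac(2) by (simp add: T_def)
    obtain c0 T' where Tc: "T = pCons c0 T'" by (rule pCons_cases)
    have Tp: "T = pCons 0 T'" using Tc T0 by simp
    have dT: "degree T \<le> Suc d" unfolding T_def
      by (intro degree_add_le order.trans[OF degree_smult_le] dP dQ)
    have dT': "degree T' \<le> d"
    proof (cases "T' = 0")
      case False
      then have "degree T = Suc (degree T')" unfolding Tp by simp
      then show ?thesis using dT by simp
    qed simp
    have dB0: "degree B \<le> Suc d" unfolding B_def
      by (intro degree_add_le order.trans[OF degree_smult_le] dP dQ)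
    have dB: "degree B \<le> d"
    proof (rule degree_le, intro allI impI)
      fix i assume i: "d < i"
      show "coeff B i = 0"
      proof (cases "i = Suc d")
        case True then show ?thesis using ac(3) by (simp add: B_def)
      next
        case False then have "degree B < i" using i dB0 by simp
        then show ?thesis by (rule coeff_eq_0)
      qed
    qed
    have HT: "\<forall>z. cmod z = 1 \<longrightarrow> (cmod (poly T' z))^2 + (cmod (poly B z))^2 = 1"
    proof (intro allI impI)
      fix z :: complex assume z: "cmod z = 1"
      have "cmod (poly T z) = cmod (poly T' z)" unfolding Tp using z by (simp add: norm_mult)
      moreover have "complex_of_real ((cmod (poly T z))^2 + (cmod (poly B z))^2) =
          complex_of_real ((cmod (poly P z))^2 + (cmod (poly Q z))^2)"
        unfolding of_real_add complex_norm_square T_def B_def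
        using norm_rot[of a "poly P z" c "poly Q z"] ac(1) by simp
      ultimately show "(cmod (poly T' z))^2 + (cmod (poly B z))^2 = 1" using H z
        by (metis of_real_eq_iff)
    qed
    obtain gs' V' where IH: "\<forall>g\<in>set gs'. valid_gate (Suc n) g" "length gs' = Suc d + d * n"
      "blk n (circuit_mat (Suc n) gs') V'"
      "\<forall>x<2^n. V' x 0 0 = poly T' (omg n x) \<and> V' x 1 0 = poly B (omg n x)"
      using Suc.IH dT' dB HT by blast
    define gs where "gs = gs' @ phases n n @ [G1 n (u2 a c)]"
    have cm: "circuit_mat (Suc n) gs = (gate_mat (Suc n) (G1 n (u2 a c)) * circuit_mat (Suc n) (phases n n))
        * circuit_mat (Suc n) gs'"
      unfolding gs_def circuit_append circuit_single ..
    note bl = blk_mult[OF blk_mult[OF blk_G1[of n "u2 a c"] blk_phases[OF order_refl]] IH(3)]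
    have alg1: "a * (cnj a * p + cnj c * q) + (- cnj c) * ((- c) * p + a * q) = (a * cnj a + c * cnj c) * p"
      and alg2: "c * (cnj a * p + cnj c * q) + cnj a * ((- c) * p + a * q) = (a * cnj a + c * cnj c) * q"
      for p q by (simp_all add: algebra_simps)
    have vals: "a * (omg n x * poly T' (omg n x)) + (- cnj c) * poly B (omg n x) = poly P (omg n x) \<and>
       c * (omg n x * poly T' (omg n x)) + cnj a * poly B (omg n x) = poly Q (omg n x)" for x
    proof -
      have eT: "omg n x * poly T' (omg n x) = cnj a * poly P (omg n x) + cnj c * poly Q (omg n x)"
        using arg_cong[OF Tp, of "\<lambda>p. poly p (omg n x)"] by (simp add: T_def)
      show ?thesis unfolding eT using alg1 alg2 ac(1) by (simp add: B_def)
    qed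
    show "\<exists>gs V. (\<forall>g\<in>set gs. valid_gate (Suc n) g) \<and> length gs = Suc (Suc d) + Suc d * n \<and>
      blk n (circuit_mat (Suc n) gs) V \<and>
      (\<forall>x<2^n. V x 0 0 = poly P (omg n x) \<and> V x 1 0 = poly Q (omg n x))"
      apply (rule exI[of _ gs])
      apply (intro exI conjI)
        prefer 3
        apply (unfold cm, rule bl)
      subgoal using IH(1) valid_phases unitary_u2[OF ac(1)] by (auto simp: gs_def)
      subgoal using IH(2) by (simp add: gs_def length_phases)
      subgoal using IH(4) vals by (auto simp: u2_def mult.assoc)
      done
  qed
qed

lemma complement:
  assumes dP: "degree P \<le> d" and H: "\<forall>z. cmod z = 1 \<longrightarrow> cmod (poly P z) \<le> 1"
  shows "\<exists>Q. degree Q \<le> d \<and> (\<forall>z. cmod z = 1 \<longrightarrow> (cmod (poly P z))^2 + (cmod (poly Q z))^2 = 1)"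
proof -
  define R where "R = monom 1 d - P * pstar d P"
  have dR: "degree R \<le> 2 * d" unfolding R_def
  proof (rule degree_diff_le)
    show "degree (monom (1::complex) d) \<le> 2 * d" using degree_monom_le[of "1::complex" d] by simp
    have "degree (P * pstar d P) \<le> degree P + degree (pstar d P)" by (rule degree_mult_le)
    then show "degree (P * pstar d P) \<le> 2 * d" using dP degree_pstar[of d P] by simp
  qed
  have pR: "poly R z = z^d * of_real (1 - (cmod (poly P z))^2)" if z: "cmod z = 1" for z
    unfolding R_def using poly_QQ[OF dP z] by (simp add: poly_monom algebra_simps)
  have HR: "\<forall>z. cmod z = 1 \<longrightarrow> (\<exists>r::real. r \<ge> 0 \<and> poly R z = z^d * of_real r)"
  proof (intro allI impI)
    fix z :: complex assume z: "cmod z = 1"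
    have "(cmod (poly P z))^2 \<le> 1" using H z by (simp add: power_le_one)
    then show "\<exists>r::real. r \<ge> 0 \<and> poly R z = z^d * of_real r"
      using pR[OF z] by (intro exI[of _ "1 - (cmod (poly P z))^2"]) (simp only:, simp)
  qed
  obtain Q where Q: "degree Q \<le> d" "R = Q * pstar d Q" using FR[OF dR HR] by blast
  have "(cmod (poly P z))^2 + (cmod (poly Q z))^2 = 1" if z: "cmod z = 1" for z
  proof -
    have z0: "z \<noteq> 0" using z by auto
    have "z^d * of_real (1 - (cmod (poly P z))^2) = z^d * of_real ((cmod (poly Q z))^2)"
      using pR[OF z] poly_QQ[OF Q(1) z] Q(2) by simp
    then have "complex_of_real (1 - (cmod (poly P z))^2) = of_real ((cmod (poly Q z))^2)" using z0 by simp
    then show ?thesis by (simp only: of_real_eq_iff)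
  qed
  then show ?thesis using Q(1) by blast
qed

lemma circle_exp: "cmod z = 1 \<Longrightarrow> z = exp (\<i> * complex_of_real (Arg z))"
proof -
  assume z: "cmod z = 1"
  then have "z \<noteq> 0" by auto
  then have "sgn z = cis (Arg z)" using Arg_correct by blast
  moreover have "sgn z = z" using z by (simp add: sgn_div_norm)
  ultimately show ?thesis by (simp add: cis_conv_exp)
qed

theorem corollary3:
  "\<exists>C::real. \<forall>(n::nat) (d::nat) (\<alpha>::nat \<Rightarrow> complex).
     n \<ge> 1 \<longrightarrow> d \<ge> 1 \<longrightarrow>
     (\<forall>x::real. (cmod (trig_poly n d \<alpha> x))\<^sup>2 \<le> 1) \<longrightarrow>
     (\<exists>gs::gate list.
        (\<forall>g\<in>set gs. valid_gate (n + 1) g) \<and>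
        real (length gs) \<le> C * real d * real n \<and>
        (\<forall>i<2 ^ n. \<forall>j<2 ^ n.
           circuit_mat (n + 1) gs $$ (i, j) =
             (if i = j then trig_poly n d \<alpha> (real i) else 0)))"
proof (intro exI[of _ 3] allI impI)
  fix n d :: nat and \<alpha> :: "nat \<Rightarrow> complex"
  assume n1: "n \<ge> 1" and d1: "d \<ge> 1" and hyp: "\<forall>x::real. (cmod (trig_poly n d \<alpha> x))\<^sup>2 \<le> 1"
  define P where "P = (\<Sum>k\<le>d. monom (\<alpha> k) k)"
  have dP: "degree P \<le> d"
    by (rule degree_le) (auto simp: P_def coeff_sum coeff_monom)
  have tp: "trig_poly n d \<alpha> x = poly P (exp (\<i> * complex_of_real (2 * pi * x / 2^n)))" for x
    unfolding trig_poly_def P_def poly_sum poly_monom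
  proof (rule sum.cong[OF refl])
    fix k assume "k \<in> {..d}"
    have "2 * complex_of_real pi * \<i> * of_nat k * complex_of_real x / 2 ^ n =
        of_nat k * (\<i> * complex_of_real (2 * pi * x / 2^n))" by (simp add: field_simps)
    then show "\<alpha> k * exp (2 * complex_of_real pi * \<i> * of_nat k * complex_of_real x / 2 ^ n) =
       \<alpha> k * exp (\<i> * complex_of_real (2 * pi * x / 2 ^ n)) ^ k"
      by (simp only: exp_of_nat_mult)
  qed
  have HP: "\<forall>z. cmod z = 1 \<longrightarrow> cmod (poly P z) \<le> 1"
  proof (intro allI impI)
    fix z :: complex assume z: "cmod z = 1"
    define x where "x = Arg z * 2^n / (2 * pi)"
    have "2 * pi * x / 2^n = Arg z" unfolding x_def by (simp add: field_simps)
    then have "poly P z = trig_poly n d \<alpha> x" unfolding tp using circle_exp[OF z] by simp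
    then have "(cmod (poly P z))^2 \<le> 1" using hyp by simp
    then show "cmod (poly P z) \<le> 1" by (simp add: power_le_one_iff abs_square_le_1)
  qed
  obtain Q where Q: "degree Q \<le> d" "\<forall>z. cmod z = 1 \<longrightarrow> (cmod (poly P z))^2 + (cmod (poly Q z))^2 = 1"
    using complement[OF dP HP] by blast
  obtain gs V where G: "\<forall>g\<in>set gs. valid_gate (Suc n) g" "length gs = Suc d + d * n"
      "blk n (circuit_mat (Suc n) gs) V" "\<forall>x<2^n. V x 0 0 = poly P (omg n x) \<and> V x 1 0 = poly Q (omg n x)"
    using qsp[of d n, rule_format, OF dP Q(1) Q(2)[rule_format]] by blast
  have len: "Suc d + d * n \<le> 3 * d * n"
  proof -
    have "d \<le> d * n" using n1 by simp
    moreover have "1 \<le> d * n" using n1 d1 by simp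
    ultimately show ?thesis by linarith
  qed
  have "real (length gs) \<le> 3 * real d * real n"
  proof -
    have "real (length gs) \<le> real (3 * d * n)" using len G(2) by (simp only: of_nat_le_iff)
    then show ?thesis by simp
  qed
  moreover have "circuit_mat (n + 1) gs $$ (i, j) = (if i = j then trig_poly n d \<alpha> (real i) else 0)"
    if i: "i < 2^n" and j: "j < 2^n" for i j
  proof -
    have i2: "i < 2^Suc n" and j2: "j < 2^Suc n" using i j by auto
    have "circuit_mat (Suc n) gs $$ (i, j) = (if i mod 2^n = j mod 2^n then V (i mod 2^n) (i div 2^n) (j div 2^n) else 0)"
      using G(3) i2 j2 unfolding blk_def by blast
    also have "\<dots> = (if i = j then V i 0 0 else 0)" using i j by simp
    also have "\<dots> = (if i = j then trig_poly n d \<alpha> (real i) else 0)"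
      using G(4) i by (simp add: tp omg_def)
    finally show ?thesis by simp
  qed
  moreover have "\<forall>g\<in>set gs. valid_gate (n + 1) g" using G(1) by simp
  ultimately show "\<exists>gs::gate list.
        (\<forall>g\<in>set gs. valid_gate (n + 1) g) \<and>
        real (length gs) \<le> 3 * real d * real n \<and>
        (\<forall>i<2 ^ n. \<forall>j<2 ^ n.
           circuit_mat (n + 1) gs $$ (i, j) =
             (if i = j then trig_poly n d \<alpha> (real i) else 0))" by blast
qed


end
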